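(* Let $W\in L^\infty$ and $(X_t)_{t\in\mathbb{T}}\in\mathcal{A}(W)$. Then $(X_t)_{t\in\mathbb{T}}$ is optimal (attains the supremum defining $U(W)$) if and only if the process $(u_t'(\tilde X_t))_{t\in\mathbb{T}}$ is an $(\mathcal{F}_t)$-martingale.
   Context: Let $T\ge 1$ be an integer and $\mathbb{T}=\{1,\dots,T\}$. Let $(\Omega,\mathcal{F},(\mathcal{F}_t)_{t\in\{0,1,\dots,T\}},P)$ be a filtered probability space and $L^{\infty}=L^{\infty}(\Omega,\mathcal{F}_T,P)$. Let $(r_t)_{t\in\mathbb{T}}$ be a bounded, nonnegative, predictable process ($r_t$ is $\mathcal{F}_{t-1}$-measurable), $B_0=1$, $B_t=\prod_{k=1}^t(1+r_k)$, and for a process $(X_t)$ write $\tilde X_t=X_t/B_t$. For $W\in L^\infty$, $\mathcal{A}(W)$ is the set of $(\mathcal{F}_t)$-adapted processes $(Y_t)_{t\in\mathbb{T}}$ with $Y_t\in L^\infty$ for all $t$ and $\sum_{t\in\mathbb{T}}\tilde Y_t=W$ a.s. For each $t\in\mathbb{T}$, $u_t:\mathbb{R}\to\mathbb{R}$ is strictly concave, $C^1$, with $u_t'(x)>0$ for all $x$. Define $U(W)=\sup\{\sum_{t\in\mathbb{T}}E[u_t(\tilde Y_t)]:(Y_t)\in\mathcal{A}(W)\}\in\mathbb{R}\cup\{+\infty\}$. An allocation $(X_t)\in\mathcal{A}(W)$ is optimal if it attains this supremum. *)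

theory Defs
  imports "HOL-Probability.Probability"
begin

definition strict_concave_on :: "real set \<Rightarrow> (real \<Rightarrow> real) \<Rightarrow> bool" where
  "strict_concave_on S f \<longleftrightarrow> convex S \<and>
    (\<forall>x\<in>S. \<forall>y\<in>S. \<forall>a::real. x \<noteq> y \<and> 0 < a \<and> a < 1 \<longrightarrow>
        a * f x + (1 - a) * f y < f (a * x + (1 - a) * y))"

text \<open>Essentially bounded real random variable measurable w.r.t. the sigma-algebra N
  (a representative of an element of L-infinity(Omega, N, P)).\<close>
definition Linf :: "'a measure \<Rightarrow> 'a measure \<Rightarrow> ('a \<Rightarrow> real) \<Rightarrow> bool" where
  "Linf M N X \<longleftrightarrow> X \<in> borel_measurable N \<and> (\<exists>C. AE \<omega> in M. \<bar>X \<omega>\<bar> \<le> C)"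

definition bank :: "(nat \<Rightarrow> 'a \<Rightarrow> real) \<Rightarrow> nat \<Rightarrow> 'a \<Rightarrow> real" where
  "bank r t \<omega> = (\<Prod>k\<in>{1..t}. 1 + r k \<omega>)"

definition allocations ::
  "'a measure \<Rightarrow> (nat \<Rightarrow> 'a measure) \<Rightarrow> nat \<Rightarrow> (nat \<Rightarrow> 'a \<Rightarrow> real) \<Rightarrow> ('a \<Rightarrow> real)
     \<Rightarrow> (nat \<Rightarrow> 'a \<Rightarrow> real) set" where
  "allocations M F T r W = {Y. (\<forall>t\<in>{1..T}. Linf M (F t) (Y t)) \<and>
      (AE \<omega> in M. (\<Sum>t\<in>{1..T}. Y t \<omega> / bank r t \<omega>) = W \<omega>)}"

definition total_utility ::
  "'a measure \<Rightarrow> nat \<Rightarrow> (nat \<Rightarrow> 'a \<Rightarrow> real) \<Rightarrow> (nat \<Rightarrow> real \<Rightarrow> real) \<Rightarrow> (nat \<Rightarrow> 'a \<Rightarrow> real) \<Rightarrow> real" where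
  "total_utility M T r u Y = (\<Sum>t\<in>{1..T}. integral\<^sup>L M (\<lambda>\<omega>. u t (Y t \<omega> / bank r t \<omega>)))"

definition Uval ::
  "'a measure \<Rightarrow> (nat \<Rightarrow> 'a measure) \<Rightarrow> nat \<Rightarrow> (nat \<Rightarrow> 'a \<Rightarrow> real) \<Rightarrow> (nat \<Rightarrow> real \<Rightarrow> real)
     \<Rightarrow> ('a \<Rightarrow> real) \<Rightarrow> ereal" where
  "Uval M F T r u W = (SUP Y\<in>allocations M F T r W. ereal (total_utility M T r u Y))"

definition optimal ::
  "'a measure \<Rightarrow> (nat \<Rightarrow> 'a measure) \<Rightarrow> nat \<Rightarrow> (nat \<Rightarrow> 'a \<Rightarrow> real) \<Rightarrow> (nat \<Rightarrow> real \<Rightarrow> real)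
     \<Rightarrow> ('a \<Rightarrow> real) \<Rightarrow> (nat \<Rightarrow> 'a \<Rightarrow> real) \<Rightarrow> bool" where
  "optimal M F T r u W X \<longleftrightarrow> X \<in> allocations M F T r W \<and>
     ereal (total_utility M T r u X) = Uval M F T r u W"

definition martingale_on ::
  "'a measure \<Rightarrow> (nat \<Rightarrow> 'a measure) \<Rightarrow> nat set \<Rightarrow> (nat \<Rightarrow> 'a \<Rightarrow> real) \<Rightarrow> bool" where
  "martingale_on M F I Z \<longleftrightarrow>
     (\<forall>t\<in>I. Z t \<in> borel_measurable (F t) \<and> integrable M (Z t)) \<and>
     (\<forall>s\<in>I. \<forall>t\<in>I. s \<le> t \<longrightarrow> (AE \<omega> in M. real_cond_exp M (F s) (Z t) \<omega> = Z s \<omega>))"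

end

theory Submission
  imports Defs
begin


lemma cont_bdd:
  fixes g :: "real \<Rightarrow> real"
  assumes "continuous_on UNIV g"
  shows "\<exists>K. \<forall>x. \<bar>x\<bar> \<le> C \<longrightarrow> \<bar>g x\<bar> \<le> K"
proof -
  have "compact (g ` {-C..C})"
    by (rule compact_continuous_image) (auto intro: continuous_on_subset[OF assms])
  then have "bounded (g ` {-C..C})" by (rule compact_imp_bounded)
  then obtain K where K: "\<forall>y\<in>g ` {-C..C}. norm y \<le> K" by (auto simp: bounded_iff)
  show ?thesis
    by (rule exI[of _ K]) (use K in \<open>auto simp: abs_le_iff\<close>)
qed

lemma (in prob_space) int_comp_mult:
  fixes g :: "real \<Rightarrow> real"
  assumes g: "continuous_on UNIV g" and a: "a \<in> borel_measurable M" and b: "b \<in> borel_measurable M"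
    and aC: "AE \<omega> in M. \<bar>a \<omega>\<bar> \<le> C" and bC: "AE \<omega> in M. \<bar>b \<omega>\<bar> \<le> D"
  shows "integrable M (\<lambda>\<omega>. g (a \<omega>) * b \<omega>)"
proof -
  obtain K where K: "\<And>x. \<bar>x\<bar> \<le> C \<Longrightarrow> \<bar>g x\<bar> \<le> K" using cont_bdd[OF g, of C] by blast
  have gm: "g \<in> borel_measurable borel" using g by (rule borel_measurable_continuous_onI)
  have m: "(\<lambda>\<omega>. g (a \<omega>) * b \<omega>) \<in> borel_measurable M"
    using measurable_compose[OF a gm] b by measurable
  show ?thesis
  proof (rule integrable_const_bound[where B="K * D"])
    show "AE x in M. norm (g (a x) * b x) \<le> K * D"
      using aC bC
    proof eventually_elim
      case (elim x)
      have "\<bar>g (a x)\<bar> \<le> K" using K elim by auto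
      then show ?case using elim by (auto simp: abs_mult intro!: mult_mono)
    qed
  qed (rule m)
qed

lemma (in prob_space) int_comp:
  fixes g :: "real \<Rightarrow> real"
  assumes g: "continuous_on UNIV g" and a: "a \<in> borel_measurable M"
    and aC: "AE \<omega> in M. \<bar>a \<omega>\<bar> \<le> C"
  shows "integrable M (\<lambda>\<omega>. g (a \<omega>))"
  using int_comp_mult[OF g a borel_measurable_const aC, of 1 1] by simp

lemma tangent:
  fixes f :: "real \<Rightarrow> real"
  assumes sc: "strict_concave_on UNIV f" and d: "\<And>x. (f has_real_derivative f' x) (at x)"
  shows "f y \<le> f x + f' x * (y - x)"
proof -
  have cv: "convex_on UNIV (\<lambda>x. - f x)"
  proof (rule convex_onI)
    fix t x y :: real assume t: "0 < t" "t < 1"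
    show "- f ((1 - t) *\<^sub>R x + t *\<^sub>R y) \<le> (1 - t) * - f x + t * - f y"
    proof (cases "x = y")
      case True then show ?thesis by (simp add: algebra_simps)
    next
      case False
      have H: "\<forall>x\<in>UNIV. \<forall>y\<in>UNIV. \<forall>a::real. x \<noteq> y \<and> 0 < a \<and> a < 1 \<longrightarrow>
        a * f x + (1 - a) * f y < f (a * x + (1 - a) * y)" using sc unfolding strict_concave_on_def by blast
      have "(1 - t) * f x + t * f y < f ((1 - t) * x + t * y)"
        using H[rule_format, of x y "1-t"] False t by simp
      then show ?thesis by (simp add: algebra_simps)
    qed
  qed simp
  have "(\<lambda>x. - f x) y - (\<lambda>x. - f x) x \<ge> (- f' x) * (y - x)"
    by (rule convex_on_imp_above_tangent[OF cv]) (auto intro!: DERIV_minus d)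
  then show ?thesis by (simp add: algebra_simps)
qed

lemma (in prob_space) limit_lemma:
  fixes g :: "real \<Rightarrow> real"
  assumes g: "continuous_on UNIV g" and a: "a \<in> borel_measurable M"
    and aC: "AE \<omega> in M. \<bar>a \<omega>\<bar> \<le> C" and A: "A \<in> sets M"
    and e: "e \<longlonglongrightarrow> 0" and e1: "\<And>n. \<bar>e n\<bar> \<le> 1"
  shows "(\<lambda>n. \<integral>\<omega>. indicator A \<omega> * g (a \<omega> + e n) \<partial>M) \<longlonglongrightarrow> (\<integral>\<omega>. indicator A \<omega> * g (a \<omega>) \<partial>M)"
proof -
  obtain K where K: "\<And>x. \<bar>x\<bar> \<le> C + 1 \<Longrightarrow> \<bar>g x\<bar> \<le> K" using cont_bdd[OF g, of "C+1"] by blast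
  have gm: "g \<in> borel_measurable borel" using g by (rule borel_measurable_continuous_onI)
  show ?thesis
  proof (rule integral_dominated_convergence[where w="\<lambda>_. K"])
    show "(\<lambda>\<omega>. indicator A \<omega> * g (a \<omega>)) \<in> borel_measurable M"
      using measurable_compose[OF a gm] A by measurable
    show "(\<lambda>\<omega>. indicator A \<omega> * g (a \<omega> + e n)) \<in> borel_measurable M" for n
    proof -
      have "(\<lambda>\<omega>. a \<omega> + e n) \<in> borel_measurable M" using a by measurable
      from measurable_compose[OF this gm] show ?thesis using A by measurable
    qed
    show "integrable M (\<lambda>_. K)" by simp
    show "AE x in M. (\<lambda>n. indicator A x * g (a x + e n)) \<longlonglongrightarrow> indicator A x * g (a x)"
    proof (rule AE_I2)
      fix x
      have "(\<lambda>n. a x + e n) \<longlonglongrightarrow> a x + 0" by (intro tendsto_intros e)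
      then have "(\<lambda>n. g (a x + e n)) \<longlonglongrightarrow> g (a x)"
        using isCont_tendsto_compose[of "a x" g] g
        by (simp add: continuous_on_eq_continuous_at)
      then show "(\<lambda>n. indicator A x * g (a x + e n)) \<longlonglongrightarrow> indicator A x * g (a x)"
        by (intro tendsto_intros)
    qed
    show "AE x in M. norm (indicator A x * g (a x + e n)) \<le> K" for n
      using aC
    proof eventually_elim
      case (elim x)
      have "\<bar>a x + e n\<bar> \<le> C + 1" using elim e1[of n] by linarith
      then have "\<bar>g (a x + e n)\<bar> \<le> K" by (rule K)
      then show ?case by (auto simp: indicator_def)
    qed
  qed
qed


lemma (in prob_space) pert_bound:
  fixes f f' :: "real \<Rightarrow> real"
  assumes sc: "strict_concave_on UNIV f" and d: "\<And>x. (f has_real_derivative f' x) (at x)"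
    and c': "continuous_on UNIV f'"
    and a: "a \<in> borel_measurable M" and aC: "AE \<omega> in M. \<bar>a \<omega>\<bar> \<le> C" and A: "A \<in> sets M"
  shows "c * (\<integral>\<omega>. indicator A \<omega> * f' (a \<omega> + c) \<partial>M)
          \<le> (\<integral>\<omega>. f (a \<omega> + c * indicator A \<omega>) \<partial>M) - (\<integral>\<omega>. f (a \<omega>) \<partial>M)"
proof -
  have fc: "continuous_on UNIV f"
    using d by (intro continuous_at_imp_continuous_on) (auto intro: DERIV_isCont)
  have am: "(\<lambda>\<omega>. a \<omega> + c * indicator A \<omega>) \<in> borel_measurable M" using a A by measurable
  have amC: "AE \<omega> in M. \<bar>a \<omega> + c * indicator A \<omega>\<bar> \<le> C + \<bar>c\<bar>"
    using aC by eventually_elim (auto simp: indicator_def)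
  have i1: "integrable M (\<lambda>\<omega>. f (a \<omega> + c * indicator A \<omega>))" by (rule int_comp[OF fc am amC])
  have i2: "integrable M (\<lambda>\<omega>. f (a \<omega>))" by (rule int_comp[OF fc a aC])
  have am2: "(\<lambda>\<omega>. a \<omega> + c) \<in> borel_measurable M" using a by measurable
  have amC2: "AE \<omega> in M. \<bar>a \<omega> + c\<bar> \<le> C + \<bar>c\<bar>"
    using aC by eventually_elim auto
  have i3: "integrable M (\<lambda>\<omega>. indicator A \<omega> * f' (a \<omega> + c))"
    using integrable_mult_indicator[OF A int_comp[OF c' am2 amC2]] by simp
  have "c * (\<integral>\<omega>. indicator A \<omega> * f' (a \<omega> + c) \<partial>M) = (\<integral>\<omega>. c * (indicator A \<omega> * f' (a \<omega> + c)) \<partial>M)"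
    by simp
  also have "\<dots> \<le> (\<integral>\<omega>. f (a \<omega> + c * indicator A \<omega>) - f (a \<omega>) \<partial>M)"
  proof (rule integral_mono)
    show "integrable M (\<lambda>\<omega>. c * (indicator A \<omega> * f' (a \<omega> + c)))" using i3 by simp
    show "integrable M (\<lambda>\<omega>. f (a \<omega> + c * indicator A \<omega>) - f (a \<omega>))" using i1 i2 by simp
    fix \<omega>
    have "f (a \<omega>) \<le> f (a \<omega> + c * indicator A \<omega>) + f' (a \<omega> + c * indicator A \<omega>) * (a \<omega> - (a \<omega> + c * indicator A \<omega>))"
      by (rule tangent[OF sc d])
    then show "c * (indicator A \<omega> * f' (a \<omega> + c)) \<le> f (a \<omega> + c * indicator A \<omega>) - f (a \<omega>)"
      by (cases "\<omega> \<in> A") (auto simp: algebra_simps)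
  qed
  also have "\<dots> = (\<integral>\<omega>. f (a \<omega> + c * indicator A \<omega>) \<partial>M) - (\<integral>\<omega>. f (a \<omega>) \<partial>M)"
    using i1 i2 by simp
  finally show ?thesis .
qed



theorem theorem2p8:
  fixes M :: "'a measure" and F :: "nat \<Rightarrow> 'a measure" and T :: nat
    and r :: "nat \<Rightarrow> 'a \<Rightarrow> real"
    and u u' :: "nat \<Rightarrow> real \<Rightarrow> real"
    and W :: "'a \<Rightarrow> real" and X :: "nat \<Rightarrow> 'a \<Rightarrow> real"
  assumes P: "prob_space M"
    and T: "T \<ge> 1"
    and filt_sub: "\<And>t. t \<le> T \<Longrightarrow> subalgebra M (F t)"
    and filt_mono: "\<And>s t. s \<le> t \<Longrightarrow> t \<le> T \<Longrightarrow> sets (F s) \<subseteq> sets (F t)"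
    and r_pred: "\<And>t. t \<in> {1..T} \<Longrightarrow> r t \<in> borel_measurable (F (t - 1))"
    and r_nonneg: "\<And>t \<omega>. t \<in> {1..T} \<Longrightarrow> \<omega> \<in> space M \<Longrightarrow> 0 \<le> r t \<omega>"
    and r_bdd: "\<exists>C. \<forall>t\<in>{1..T}. \<forall>\<omega>\<in>space M. r t \<omega> \<le> C"
    and u_conc: "\<And>t. t \<in> {1..T} \<Longrightarrow> strict_concave_on UNIV (u t)"
    and u_deriv: "\<And>t x. t \<in> {1..T} \<Longrightarrow> (u t has_real_derivative u' t x) (at x)"
    and u'_cont: "\<And>t. t \<in> {1..T} \<Longrightarrow> continuous_on UNIV (u' t)"
    and u'_pos: "\<And>t x. t \<in> {1..T} \<Longrightarrow> u' t x > 0"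
    and W: "Linf M (F T) W"
    and X: "X \<in> allocations M F T r W"
  shows "optimal M F T r u W X \<longleftrightarrow>
           martingale_on M F {1..T} (\<lambda>t \<omega>. u' t (X t \<omega> / bank r t \<omega>))"
proof -
  interpret prob_space M by (rule P)
  obtain Cr where Cr: "\<And>t \<omega>. t\<in>{1..T} \<Longrightarrow> \<omega>\<in>space M \<Longrightarrow> r t \<omega> \<le> Cr"
    using r_bdd by blast
  have spF: "space (F t) = space M" if "t \<le> T" for t
    using filt_sub[OF that] unfolding subalgebra_def by simp
  have measF: "f \<in> borel_measurable (F t)"
    if "s \<le> t" "t \<le> T" "f \<in> borel_measurable (F s)" for s t f
  proof (rule measurable_from_subalg[OF _ that(3)])
    show "subalgebra (F t) (F s)" unfolding subalgebra_def
      using spF[of s] spF[of t] filt_mono[OF that(1,2)] that by auto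
  qed
  have measM: "f \<in> borel_measurable M" if "t \<le> T" "f \<in> borel_measurable (F t)" for t f
    by (rule measurable_from_subalg[OF filt_sub[OF that(1)] that(2)])
  have setsM: "A \<in> sets M" if "t \<le> T" "A \<in> sets (F t)" for t A
    using filt_sub[OF that(1)] that(2) unfolding subalgebra_def by auto
  have bank_meas: "bank r t \<in> borel_measurable (F t)" if "t \<in> {1..T}" for t
  proof -
    have "(\<lambda>\<omega>. \<Prod>k\<in>{1..t}. 1 + r k \<omega>) \<in> borel_measurable (F t)"
    proof (rule borel_measurable_prod)
      fix k assume k: "k \<in> {1..t}"
      have "r k \<in> borel_measurable (F t)"
        by (rule measF[OF _ _ r_pred[of k]]) (use k that in auto)
      then show "(\<lambda>\<omega>. 1 + r k \<omega>) \<in> borel_measurable (F t)" by measurable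
    qed
    moreover have "bank r t = (\<lambda>\<omega>. \<Prod>k\<in>{1..t}. 1 + r k \<omega>)" by (rule ext) (simp add: bank_def)
    ultimately show ?thesis by simp
  qed
  have bank_ge1: "1 \<le> bank r t \<omega>" if "t \<in> {1..T}" "\<omega> \<in> space M" for t \<omega>
    unfolding bank_def by (rule prod_ge_1) (use r_nonneg that in auto)
  have bank_le: "bank r t \<omega> \<le> (1 + Cr) ^ t" if "t \<in> {1..T}" "\<omega> \<in> space M" for t \<omega>
  proof -
    have "bank r t \<omega> \<le> (\<Prod>k\<in>{1..t}. 1 + Cr)"
      unfolding bank_def by (rule prod_mono) (use r_nonneg Cr that in \<open>auto intro!: add_nonneg_nonneg\<close>)
    then show ?thesis by simp
  qed
  have Xlinf: "Linf M (F t) (X t)" if "t \<in> {1..T}" for t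
    using X that unfolding allocations_def by auto
  have Xsum: "AE \<omega> in M. (\<Sum>t\<in>{1..T}. X t \<omega> / bank r t \<omega>) = W \<omega>"
    using X unfolding allocations_def by auto
  have quot_meas: "(\<lambda>\<omega>. y \<omega> / bank r t \<omega>) \<in> borel_measurable (F t)"
    if "t \<in> {1..T}" "Linf M (F t) y" for y t
    using that(2) bank_meas[OF that(1)] unfolding Linf_def by (auto intro!: borel_measurable_divide)
  have quot_measM: "(\<lambda>\<omega>. y \<omega> / bank r t \<omega>) \<in> borel_measurable M"
    if "t \<in> {1..T}" "Linf M (F t) y" for y t
    using quot_meas[OF that] measM that(1) by auto
  have quot_bdd: "\<exists>C. AE \<omega> in M. \<bar>y \<omega> / bank r t \<omega>\<bar> \<le> C"
    if tT: "t \<in> {1..T}" and L: "Linf M (F t) y" for y t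
  proof -
    obtain C where C: "AE \<omega> in M. \<bar>y \<omega>\<bar> \<le> C" using L unfolding Linf_def by blast
    have "AE \<omega> in M. \<bar>y \<omega> / bank r t \<omega>\<bar> \<le> C"
      using C AE_space
    proof eventually_elim
      case (elim \<omega>)
      have b: "1 \<le> bank r t \<omega>" by (rule bank_ge1[OF tT elim(2)])
      have "\<bar>y \<omega> / bank r t \<omega>\<bar> = \<bar>y \<omega>\<bar> / bank r t \<omega>" using b by (simp add: abs_div)
      also have "\<dots> \<le> \<bar>y \<omega>\<bar>" using b by (simp add: divide_le_eq mult_le_cancel_left1)
      finally show ?case using elim(1) by linarith
    qed
    then show ?thesis by blast
  qed
  have u_cont: "continuous_on UNIV (u t)" if "t \<in> {1..T}" for t
    using u_deriv[OF that] by (intro continuous_at_imp_continuous_on) (auto intro: DERIV_isCont)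
  define Z where "Z = (\<lambda>t \<omega>. u' t (X t \<omega> / bank r t \<omega>))"
  have Z_meas: "Z t \<in> borel_measurable (F t)" if "t \<in> {1..T}" for t
  proof -
    have gm: "u' t \<in> borel_measurable borel" using u'_cont[OF that] by (rule borel_measurable_continuous_onI)
    show ?thesis unfolding Z_def using measurable_compose[OF quot_meas[OF that Xlinf[OF that]] gm] .
  qed
  have Z_int: "integrable M (Z t)" if tT: "t \<in> {1..T}" for t
  proof -
    obtain C where C: "AE \<omega> in M. \<bar>X t \<omega> / bank r t \<omega>\<bar> \<le> C" using quot_bdd[OF tT Xlinf[OF tT]] by blast
    show ?thesis unfolding Z_def by (rule int_comp[OF u'_cont[OF tT] quot_measM[OF tT Xlinf[OF tT]] C])
  qed
  have sfs: "sigma_finite_subalgebra M (F t)" if "t \<le> T" for t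
  proof (rule finite_measure_subalgebra_is_sigma_finite)
    have "finite_measure M" using P by (simp add: prob_space_def)
    then show "finite_measure_subalgebra M (F t)"
      by (intro finite_measure_subalgebra.intro finite_measure_subalgebra_axioms.intro filt_sub that)
  qed
  have opt_iff: "optimal M F T r u W X \<longleftrightarrow>
      (\<forall>Y\<in>allocations M F T r W. total_utility M T r u Y \<le> total_utility M T r u X)"
  proof
    assume "optimal M F T r u W X"
    then have eq: "ereal (total_utility M T r u X) = (SUP Y\<in>allocations M F T r W. ereal (total_utility M T r u Y))"
      unfolding optimal_def Uval_def by simp
    show "\<forall>Y\<in>allocations M F T r W. total_utility M T r u Y \<le> total_utility M T r u X"
    proof
      fix Y assume "Y \<in> allocations M F T r W"
      then have "ereal (total_utility M T r u Y) \<le> ereal (total_utility M T r u X)"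
        unfolding eq by (rule SUP_upper)
      then show "total_utility M T r u Y \<le> total_utility M T r u X" by simp
    qed
  next
    assume H: "\<forall>Y\<in>allocations M F T r W. total_utility M T r u Y \<le> total_utility M T r u X"
    have "(SUP Y\<in>allocations M F T r W. ereal (total_utility M T r u Y)) = ereal (total_utility M T r u X)"
    proof (rule antisym)
      show "(SUP Y\<in>allocations M F T r W. ereal (total_utility M T r u Y)) \<le> ereal (total_utility M T r u X)"
        using H by (intro SUP_least) simp
      show "ereal (total_utility M T r u X) \<le> (SUP Y\<in>allocations M F T r W. ereal (total_utility M T r u Y))"
        using X by (rule SUP_upper)
    qed
    then show "optimal M F T r u W X" unfolding optimal_def Uval_def using X by simp
  qed
  have Zeq: "(\<lambda>t \<omega>. u' t (X t \<omega> / bank r t \<omega>)) = Z" by (simp add: Z_def)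
  have TT: "T \<in> {1..T}" using T by simp
  have mart_imp: "total_utility M T r u Y \<le> total_utility M T r u X"
    if mart: "martingale_on M F {1..T} Z" and Y: "Y \<in> allocations M F T r W" for Y
  proof -
    have Ylinf: "Linf M (F t) (Y t)" if "t \<in> {1..T}" for t
      using Y that unfolding allocations_def by auto
    have Ysum: "AE \<omega> in M. (\<Sum>t\<in>{1..T}. Y t \<omega> / bank r t \<omega>) = W \<omega>"
      using Y unfolding allocations_def by auto
    define D where "D = (\<lambda>t \<omega>. Y t \<omega> / bank r t \<omega> - X t \<omega> / bank r t \<omega>)"
    have D_meas: "D t \<in> borel_measurable (F t)" if "t \<in> {1..T}" for t
      unfolding D_def using quot_meas[OF that Ylinf[OF that]] quot_meas[OF that Xlinf[OF that]]
      by (auto intro!: borel_measurable_diff)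
    have D_measM: "D t \<in> borel_measurable M" if "t \<in> {1..T}" for t
      using measM[OF _ D_meas[OF that]] that by auto
    have D_bdd: "\<exists>C. AE \<omega> in M. \<bar>D t \<omega>\<bar> \<le> C" if tT: "t \<in> {1..T}" for t
    proof -
      obtain C1 where C1: "AE \<omega> in M. \<bar>Y t \<omega> / bank r t \<omega>\<bar> \<le> C1" using quot_bdd[OF tT Ylinf[OF tT]] by blast
      obtain C2 where C2: "AE \<omega> in M. \<bar>X t \<omega> / bank r t \<omega>\<bar> \<le> C2" using quot_bdd[OF tT Xlinf[OF tT]] by blast
      have "AE \<omega> in M. \<bar>D t \<omega>\<bar> \<le> C1 + C2" using C1 C2
      proof eventually_elim
        case (elim \<omega>)
        show ?case unfolding D_def
          using abs_triangle_ineq4[of "Y t \<omega> / bank r t \<omega>" "X t \<omega> / bank r t \<omega>"] elim by linarith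
      qed
      then show ?thesis by blast
    qed
    have ZD_int: "integrable M (\<lambda>\<omega>. Z s \<omega> * D t \<omega>)" if sT: "s \<in> {1..T}" and tT: "t \<in> {1..T}" for s t
    proof -
      obtain C1 where C1: "AE \<omega> in M. \<bar>D t \<omega>\<bar> \<le> C1" using D_bdd[OF tT] by blast
      obtain C2 where C2: "AE \<omega> in M. \<bar>X s \<omega> / bank r s \<omega>\<bar> \<le> C2" using quot_bdd[OF sT Xlinf[OF sT]] by blast
      show ?thesis unfolding Z_def
        by (rule int_comp_mult[OF u'_cont[OF sT] quot_measM[OF sT Xlinf[OF sT]] D_measM[OF tT] C2 C1])
    qed
    have uint: "integrable M (\<lambda>\<omega>. u t (y \<omega> / bank r t \<omega>))" if tT: "t \<in> {1..T}" and L: "Linf M (F t) y" for t y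
    proof -
      obtain C where C: "AE \<omega> in M. \<bar>y \<omega> / bank r t \<omega>\<bar> \<le> C" using quot_bdd[OF tT L] by blast
      show ?thesis by (rule int_comp[OF u_cont[OF tT] quot_measM[OF tT L] C])
    qed
    have stepA: "(\<integral>\<omega>. u t (Y t \<omega> / bank r t \<omega>) \<partial>M) - (\<integral>\<omega>. u t (X t \<omega> / bank r t \<omega>) \<partial>M)
        \<le> (\<integral>\<omega>. Z t \<omega> * D t \<omega> \<partial>M)" if tT: "t \<in> {1..T}" for t
    proof -
      have "(\<integral>\<omega>. u t (Y t \<omega> / bank r t \<omega>) \<partial>M) - (\<integral>\<omega>. u t (X t \<omega> / bank r t \<omega>) \<partial>M)
          = (\<integral>\<omega>. u t (Y t \<omega> / bank r t \<omega>) - u t (X t \<omega> / bank r t \<omega>) \<partial>M)"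
        using uint[OF tT Ylinf[OF tT]] uint[OF tT Xlinf[OF tT]] by simp
      also have "\<dots> \<le> (\<integral>\<omega>. Z t \<omega> * D t \<omega> \<partial>M)"
      proof (rule integral_mono)
        show "integrable M (\<lambda>\<omega>. u t (Y t \<omega> / bank r t \<omega>) - u t (X t \<omega> / bank r t \<omega>))"
          using uint[OF tT Ylinf[OF tT]] uint[OF tT Xlinf[OF tT]] by simp
        show "integrable M (\<lambda>\<omega>. Z t \<omega> * D t \<omega>)" by (rule ZD_int[OF tT tT])
        fix \<omega>
        show "u t (Y t \<omega> / bank r t \<omega>) - u t (X t \<omega> / bank r t \<omega>) \<le> Z t \<omega> * D t \<omega>"
          using tangent[OF u_conc[OF tT] u_deriv[OF tT], of "Y t \<omega> / bank r t \<omega>" "X t \<omega> / bank r t \<omega>"]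
          unfolding Z_def D_def by simp
      qed
      finally show ?thesis .
    qed
    have stepB: "(\<integral>\<omega>. Z t \<omega> * D t \<omega> \<partial>M) = (\<integral>\<omega>. D t \<omega> * Z T \<omega> \<partial>M)" if tT: "t \<in> {1..T}" for t
    proof -
      interpret S: sigma_finite_subalgebra M "F t" by (rule sfs) (use tT in auto)
      have ce: "AE \<omega> in M. real_cond_exp M (F t) (Z T) \<omega> = Z t \<omega>"
        using mart tT TT unfolding martingale_on_def by auto
      have mD: "D t \<in> borel_measurable M" by (rule D_measM[OF tT])
      have mZ: "Z t \<in> borel_measurable M" using measM[OF _ Z_meas[OF tT]] tT by auto
      have mC: "real_cond_exp M (F t) (Z T) \<in> borel_measurable M"
        by (rule borel_measurable_cond_exp2)
      have "(\<integral>\<omega>. Z t \<omega> * D t \<omega> \<partial>M) = (\<integral>\<omega>. D t \<omega> * real_cond_exp M (F t) (Z T) \<omega> \<partial>M)"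
        using ce by (intro integral_cong_AE) (auto simp: mult.commute intro!: borel_measurable_times mD mZ mC)
      also have "\<dots> = (\<integral>\<omega>. D t \<omega> * Z T \<omega> \<partial>M)"
      proof (rule S.real_cond_exp_intg(2))
        show "integrable M (\<lambda>x. D t x * Z T x)" using ZD_int[OF TT tT] by (simp add: mult.commute)
        show "D t \<in> borel_measurable (F t)" by (rule D_meas[OF tT])
        show "Z T \<in> borel_measurable M" by (rule measM[OF _ Z_meas[OF TT]]) simp
      qed
      finally show ?thesis .
    qed
    have stepC: "(\<Sum>t\<in>{1..T}. \<integral>\<omega>. D t \<omega> * Z T \<omega> \<partial>M) = 0"
    proof -
      have "(\<Sum>t\<in>{1..T}. \<integral>\<omega>. D t \<omega> * Z T \<omega> \<partial>M) = (\<integral>\<omega>. (\<Sum>t\<in>{1..T}. D t \<omega> * Z T \<omega>) \<partial>M)"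
        by (rule Bochner_Integration.integral_sum[where I="{1..T}" and f="\<lambda>t \<omega>. D t \<omega> * Z T \<omega>", symmetric]) (use ZD_int TT in \<open>auto simp: mult.commute\<close>)
      also have "\<dots> = 0"
      proof (rule integral_eq_zero_AE)
        show "AE \<omega> in M. (\<Sum>t\<in>{1..T}. D t \<omega> * Z T \<omega>) = 0"
          using Xsum Ysum
        proof eventually_elim
          case (elim \<omega>)
          have "(\<Sum>t\<in>{1..T}. D t \<omega>) = 0"
            unfolding D_def sum_subtractf using elim by simp
          then show ?case by (simp add: sum_distrib_right[symmetric])
        qed
      qed
      finally show ?thesis .
    qed
    have "total_utility M T r u Y - total_utility M T r u X
        = (\<Sum>t\<in>{1..T}. (\<integral>\<omega>. u t (Y t \<omega> / bank r t \<omega>) \<partial>M) - (\<integral>\<omega>. u t (X t \<omega> / bank r t \<omega>) \<partial>M))"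
      unfolding total_utility_def by (simp add: sum_subtractf)
    also have "\<dots> \<le> (\<Sum>t\<in>{1..T}. \<integral>\<omega>. Z t \<omega> * D t \<omega> \<partial>M)"
      by (rule sum_mono) (rule stepA)
    also have "\<dots> = (\<Sum>t\<in>{1..T}. \<integral>\<omega>. D t \<omega> * Z T \<omega> \<partial>M)"
      by (rule sum.cong[OF refl]) (rule stepB)
    also have "\<dots> = 0" by (rule stepC)
    finally show ?thesis by simp
  qed
  show ?thesis
    unfolding opt_iff Zeq
  proof
    assume mart: "martingale_on M F {1..T} Z"
    show "\<forall>Y\<in>allocations M F T r W. total_utility M T r u Y \<le> total_utility M T r u X"
      using mart_imp[OF mart] by blast
  next
    assume opt: "\<forall>Y\<in>allocations M F T r W. total_utility M T r u Y \<le> total_utility M T r u X"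
    have key: "(\<integral>\<omega>. indicator A \<omega> * Z s \<omega> \<partial>M) = (\<integral>\<omega>. indicator A \<omega> * Z t \<omega> \<partial>M)"
      if sT: "s \<in> {1..T}" and tT: "t \<in> {1..T}" and st: "s < t" and AF: "A \<in> sets (F s)" for s t A
    proof -
      have AM: "A \<in> sets M" using setsM[OF _ AF] sT by auto
      have AFt: "A \<in> sets (F t)" using filt_mono[of s t] st tT AF by auto
      define a where "a = (\<lambda>\<omega>. X s \<omega> / bank r s \<omega>)"
      define b where "b = (\<lambda>\<omega>. X t \<omega> / bank r t \<omega>)"
      have am: "a \<in> borel_measurable M" unfolding a_def by (rule quot_measM[OF sT Xlinf[OF sT]])
      have bm: "b \<in> borel_measurable M" unfolding b_def by (rule quot_measM[OF tT Xlinf[OF tT]])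
      obtain Ca where Ca: "AE \<omega> in M. \<bar>a \<omega>\<bar> \<le> Ca" unfolding a_def using quot_bdd[OF sT Xlinf[OF sT]] by blast
      obtain Cb where Cb: "AE \<omega> in M. \<bar>b \<omega>\<bar> \<le> Cb" unfolding b_def using quot_bdd[OF tT Xlinf[OF tT]] by blast
      define Is where "Is = (\<lambda>e. \<integral>\<omega>. indicator A \<omega> * u' s (a \<omega> + e) \<partial>M)"
      define It where "It = (\<lambda>e. \<integral>\<omega>. indicator A \<omega> * u' t (b \<omega> + - e) \<partial>M)"
      have snt: "s \<noteq> t" using st by simp
      define pert where "pert = (\<lambda>c k \<omega>. X k \<omega> + c * indicator A \<omega> * bank r k \<omega>)"
      have Lpert: "Linf M (F k) (pert c k)" if kT: "k \<in> {1..T}" and sk: "s \<le> k" for k c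
      proof -
        obtain C where C: "AE \<omega> in M. \<bar>X k \<omega>\<bar> \<le> C" using Xlinf[OF kT] unfolding Linf_def by blast
        have Ak: "A \<in> sets (F k)" using filt_mono[of s k] sk kT AF by auto
        have "pert c k \<in> borel_measurable (F k)"
          unfolding pert_def using Xlinf[OF kT] bank_meas[OF kT] Ak unfolding Linf_def
          by (auto intro!: borel_measurable_add borel_measurable_times borel_measurable_indicator)
        moreover have "AE \<omega> in M. \<bar>pert c k \<omega>\<bar> \<le> C + \<bar>c\<bar> * (1 + Cr) ^ k"
          using C AE_space
        proof eventually_elim
          case (elim \<omega>)
          have b1: "1 \<le> bank r k \<omega>" by (rule bank_ge1[OF kT elim(2)])
          have b2: "bank r k \<omega> \<le> (1 + Cr) ^ k" by (rule bank_le[OF kT elim(2)])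
          have "\<bar>c * indicator A \<omega> * bank r k \<omega>\<bar> \<le> \<bar>c\<bar> * (1 + Cr) ^ k"
          proof (cases "\<omega> \<in> A")
            case True
            have "\<bar>c * bank r k \<omega>\<bar> = \<bar>c\<bar> * bank r k \<omega>" using b1 by (simp add: abs_mult)
            also have "\<dots> \<le> \<bar>c\<bar> * (1 + Cr) ^ k" by (rule mult_left_mono[OF b2]) simp
            finally show ?thesis using True by simp
          next
            case False
            have "0 \<le> (1 + Cr) ^ k" using b1 b2 by linarith
            then show ?thesis using False by simp
          qed
          then show ?case unfolding pert_def using elim(1) abs_triangle_ineq[of "X k \<omega>" "c * indicator A \<omega> * bank r k \<omega>"]
            by linarith
        qed
        ultimately show ?thesis unfolding Linf_def by blast
      qed
      have ineq: "e * (Is e - It e) \<le> 0" for e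
      proof -
        define Y where "Y = X(s := pert e s, t := pert (- e) t)"
        have quotY: "Y k \<omega> / bank r k \<omega> = X k \<omega> / bank r k \<omega> + (if k = s then e * indicator A \<omega> else 0)
            + (if k = t then - e * indicator A \<omega> else 0)" if kT: "k \<in> {1..T}" and \<omega>: "\<omega> \<in> space M" for k \<omega>
        proof -
          have b0: "bank r k \<omega> \<noteq> 0" using bank_ge1[OF kT \<omega>] by linarith
          show ?thesis
            using snt b0 by (auto simp: Y_def pert_def add_divide_distrib diff_divide_distrib)
        qed
        have Yalloc: "Y \<in> allocations M F T r W"
          unfolding allocations_def
        proof (intro CollectI conjI ballI)
          fix k assume kT: "k \<in> {1..T}"
          show "Linf M (F k) (Y k)"
          proof (cases "k = t")
            case True then show ?thesis using Lpert[OF kT, of "-e"] st by (simp add: Y_def)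
          next
            case False
            show ?thesis
            proof (cases "k = s")
              case True then show ?thesis using Lpert[OF kT, of e] False by (simp add: Y_def)
            next
              case False2: False
              then show ?thesis using Xlinf[OF kT] False by (simp add: Y_def)
            qed
          qed
        next
          show "AE \<omega> in M. (\<Sum>k\<in>{1..T}. Y k \<omega> / bank r k \<omega>) = W \<omega>"
            using Xsum AE_space
          proof eventually_elim
            case (elim \<omega>)
            have "(\<Sum>k\<in>{1..T}. Y k \<omega> / bank r k \<omega>) = (\<Sum>k\<in>{1..T}. X k \<omega> / bank r k \<omega> + (if k = s then e * indicator A \<omega> else 0)
              + (if k = t then - e * indicator A \<omega> else 0))"
            proof (rule sum.cong[OF refl])
              fix k assume "k \<in> {1..T}"
              then show "Y k \<omega> / bank r k \<omega> = X k \<omega> / bank r k \<omega> + (if k = s then e * indicator A \<omega> else 0)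
                + (if k = t then - e * indicator A \<omega> else 0)" by (rule quotY[OF _ elim(2)])
            qed
            also have "\<dots> = (\<Sum>k\<in>{1..T}. X k \<omega> / bank r k \<omega>)"
              using sT tT by (simp add: sum.distrib)
            finally show ?case using elim(1) by simp
          qed
        qed
        have le: "total_utility M T r u Y \<le> total_utility M T r u X" using opt Yalloc by blast
        define Ds where "Ds = (\<integral>\<omega>. u s (a \<omega> + e * indicator A \<omega>) \<partial>M) - (\<integral>\<omega>. u s (a \<omega>) \<partial>M)"
        define Dt where "Dt = (\<integral>\<omega>. u t (b \<omega> + - e * indicator A \<omega>) \<partial>M) - (\<integral>\<omega>. u t (b \<omega>) \<partial>M)"
        have perk: "(\<integral>\<omega>. u k (Y k \<omega> / bank r k \<omega>) \<partial>M) - (\<integral>\<omega>. u k (X k \<omega> / bank r k \<omega>) \<partial>M)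
            = (if k = s then Ds else 0) + (if k = t then Dt else 0)" if kT: "k \<in> {1..T}" for k
        proof -
          have "(\<integral>\<omega>. u k (Y k \<omega> / bank r k \<omega>) \<partial>M) = (\<integral>\<omega>. u k (X k \<omega> / bank r k \<omega> + (if k = s then e * indicator A \<omega> else 0)
            + (if k = t then - e * indicator A \<omega> else 0)) \<partial>M)"
            by (rule Bochner_Integration.integral_cong[OF refl]) (simp add: quotY[OF kT])
          then show ?thesis using snt by (auto simp: Ds_def Dt_def a_def b_def)
        qed
        have "total_utility M T r u Y - total_utility M T r u X
            = (\<Sum>k\<in>{1..T}. (\<integral>\<omega>. u k (Y k \<omega> / bank r k \<omega>) \<partial>M) - (\<integral>\<omega>. u k (X k \<omega> / bank r k \<omega>) \<partial>M))"
          unfolding total_utility_def by (simp add: sum_subtractf)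
        also have "\<dots> = (\<Sum>k\<in>{1..T}. (if k = s then Ds else 0) + (if k = t then Dt else 0))"
          by (rule sum.cong[OF refl]) (rule perk)
        also have "\<dots> = Ds + Dt" using sT tT by (simp add: sum.distrib)
        finally have "Ds + Dt \<le> 0" using le by simp
        moreover have "e * Is e \<le> Ds"
          unfolding Is_def Ds_def
          by (rule pert_bound[OF u_conc[OF sT] u_deriv[OF sT] u'_cont[OF sT] am Ca AM])
        moreover have "- e * It e \<le> Dt"
          unfolding It_def Dt_def
          using pert_bound[OF u_conc[OF tT] u_deriv[OF tT] u'_cont[OF tT] bm Cb AM, of "- e"] by simp
        ultimately show ?thesis by (simp add: right_diff_distrib)
      qed
      have e1: "\<And>n. \<bar>inverse (real (Suc n))\<bar> \<le> 1" by (simp add: inverse_le_1_iff)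
      have e1': "\<And>n. \<bar>- inverse (real (Suc n))\<bar> \<le> 1" by (simp add: inverse_le_1_iff)
      have l0: "(\<lambda>n. inverse (real (Suc n))) \<longlonglongrightarrow> 0" by (rule LIMSEQ_inverse_real_of_nat)
      have l0': "(\<lambda>n. - inverse (real (Suc n))) \<longlonglongrightarrow> 0" using tendsto_minus[OF l0] by simp
      have ls1: "(\<lambda>n. Is (inverse (real (Suc n)))) \<longlonglongrightarrow> Is 0"
        unfolding Is_def using limit_lemma[OF u'_cont[OF sT] am Ca AM l0 e1] by simp
      have ls2: "(\<lambda>n. Is (- inverse (real (Suc n)))) \<longlonglongrightarrow> Is 0"
        unfolding Is_def using limit_lemma[OF u'_cont[OF sT] am Ca AM l0' e1'] by simp
      have lt1: "(\<lambda>n. It (inverse (real (Suc n)))) \<longlonglongrightarrow> It 0"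
        unfolding It_def using limit_lemma[OF u'_cont[OF tT] bm Cb AM l0' e1'] by simp
      have lt2: "(\<lambda>n. It (- inverse (real (Suc n)))) \<longlonglongrightarrow> It 0"
        unfolding It_def using limit_lemma[OF u'_cont[OF tT] bm Cb AM l0 e1] by simp
      have "Is 0 \<le> It 0"
      proof (rule LIMSEQ_le[OF ls1 lt1])
        show "\<exists>N. \<forall>n\<ge>N. Is (inverse (real (Suc n))) \<le> It (inverse (real (Suc n)))"
        proof (intro exI allI impI)
          fix n :: nat
          let ?e = "inverse (real (Suc n))"
          have "?e > 0" by simp
          then show "Is ?e \<le> It ?e" using ineq[of ?e] mult_pos_pos[of ?e "Is ?e - It ?e"] by linarith
        qed
      qed
      moreover have "It 0 \<le> Is 0"
      proof (rule LIMSEQ_le[OF lt2 ls2])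
        show "\<exists>N. \<forall>n\<ge>N. It (- inverse (real (Suc n))) \<le> Is (- inverse (real (Suc n)))"
        proof (intro exI allI impI)
          fix n :: nat
          let ?e = "- inverse (real (Suc n))"
          have "?e < 0" by simp
          then show "It ?e \<le> Is ?e" using ineq[of ?e] mult_neg_neg[of ?e "Is ?e - It ?e"] by linarith
        qed
      qed
      ultimately have "Is 0 = It 0" by simp
      then show ?thesis by (simp add: Is_def It_def Z_def a_def b_def)
    qed
    show "martingale_on M F {1..T} Z"
      unfolding martingale_on_def
    proof (intro conjI ballI impI)
      fix t assume "t \<in> {1..T}"
      then show "Z t \<in> borel_measurable (F t)" "integrable M (Z t)" by (auto intro: Z_meas Z_int)
    next
      fix s t assume sT: "s \<in> {1..T}" and tT: "t \<in> {1..T}" and st: "s \<le> t"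
      interpret S: sigma_finite_subalgebra M "F s" by (rule sfs) (use sT in auto)
      show "AE \<omega> in M. real_cond_exp M (F s) (Z t) \<omega> = Z s \<omega>"
      proof (cases "s = t")
        case True
        then show ?thesis using S.real_cond_exp_F_meas[OF Z_int[OF sT] Z_meas[OF sT]] by simp
      next
        case False
        then have st': "s < t" using st by simp
        show ?thesis
        proof (rule S.real_cond_exp_charact)
          fix A assume A: "A \<in> sets (F s)"
          show "(\<integral>x\<in>A. Z t x \<partial>M) = (\<integral>x\<in>A. Z s x \<partial>M)"
            unfolding set_lebesgue_integral_def using key[OF sT tT st' A] by simp
        qed (auto intro: Z_int Z_meas sT tT)
      qed
    qed
  qed
qed

end
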